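(* Let $a,b,q$ be complex numbers with $q\ne0$, and define $B_{n,k}(a,b)$ ($n\ge k\ge0$) by $$z^k=\sum_{n=k}^\infty B_{n,k}(a,b)\,z^n\frac{(az;q)_n}{(bz;q)_n}\qquad(k\ge0)$$ in $\mathbb{C}[[z]]$. Put $G_k(z):=\sum_{n=k}^\infty B_{n,k}(a,b)z^n$ and $G(y,z):=\sum_{k=0}^\infty G_k(z)y^k$. Then, as formal power series in $z$ (with coefficients rational functions of $y$), $$G(y,z)=\sum_{n=0}^\infty\frac{(b/y;q)_n}{(a/y;q)_n}(yz)^n+\sum_{n=0}^\infty\big(bzq^n-aG_1(zq^n)\big)\frac{(b/y;q)_n}{(a/y;q)_{n+1}}(yz)^n.$$
   Context: $(x;q)_n=\prod_{j=0}^{n-1}(1-xq^j)$ for $n\ge0$, $(x;q)_0=1$. The family $\{z^n(az;q)_n/(bz;q)_n\}_{n\ge0}$ is a basis of $\mathbb{C}[[z]]$ in the formal sense, so the $B_{n,k}(a,b)$ are uniquely determined. *)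

theory Defs
  imports "HOL-Computational_Algebra.Formal_Power_Series"
begin

definition qpoch :: "complex \<Rightarrow> complex \<Rightarrow> nat \<Rightarrow> complex" where
  "qpoch x q n = (\<Prod>j<n. 1 - x * q ^ j)"

definition qpoch_fps :: "complex \<Rightarrow> complex \<Rightarrow> nat \<Rightarrow> complex fps" where
  "qpoch_fps c q n = (\<Prod>j<n. 1 - fps_const (c * q ^ j) * fps_X)"

definition qbasis :: "complex \<Rightarrow> complex \<Rightarrow> complex \<Rightarrow> nat \<Rightarrow> complex fps" where
  "qbasis a b q n = fps_X ^ n * qpoch_fps a q n * inverse (qpoch_fps b q n)"

definition fps_scale :: "complex \<Rightarrow> complex fps \<Rightarrow> complex fps" where
  "fps_scale c f = Abs_fps (\<lambda>m. c ^ m * fps_nth f m)"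

end

theory Submission
  imports Defs
begin
unbundle fps_syntax

lemma fps_sums_lower:
  fixes f :: "nat \<Rightarrow> complex fps"
  assumes "\<And>k m. m < k \<Longrightarrow> f k $ m = 0"
  shows "f sums Abs_fps (\<lambda>m. \<Sum>k\<le>m. f k $ m)"
  unfolding sums_def
proof (rule tendsto_fpsI)
  fix m
  show "\<forall>\<^sub>F N in sequentially. (\<Sum>k<N. f k) $ m = Abs_fps (\<lambda>m. \<Sum>k\<le>m. f k $ m) $ m"
  proof (rule eventually_sequentiallyI[of "Suc m"])
    fix N assume N: "Suc m \<le> N"
    have "(\<Sum>k<N. f k) $ m = (\<Sum>k<N. f k $ m)" by (simp add: fps_sum_nth)
    also have "\<dots> = (\<Sum>k\<le>m. f k $ m)"
    proof (rule sum.mono_neutral_right)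
      show "finite {..<N}" by simp
      show "{..m} \<subseteq> {..<N}" using N by auto
      show "\<forall>i\<in>{..<N} - {..m}. f i $ m = 0" using assms by auto
    qed
    finally show "(\<Sum>k<N. f k) $ m = Abs_fps (\<lambda>m. \<Sum>k\<le>m. f k $ m) $ m" by simp
  qed
qed

lemma fps_suminf_lower:
  fixes f :: "nat \<Rightarrow> complex fps"
  assumes "\<And>k m. m < k \<Longrightarrow> f k $ m = 0"
  shows "suminf f $ m = (\<Sum>k\<le>m. f k $ m)"
proof -
  have "suminf f = Abs_fps (\<lambda>m. \<Sum>k\<le>m. f k $ m)"
    by (rule sums_unique[OF fps_sums_lower[OF assms], symmetric])
  then show ?thesis by simp
qed

lemma scale_nth[simp]: "fps_scale c f $ m = c ^ m * f $ m"
  by (simp add: fps_scale_def)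

lemma scale_mult: "fps_scale c (f * g) = fps_scale c f * fps_scale c g"
proof (rule fps_ext)
  fix m
  have "fps_scale c (f * g) $ m = (\<Sum>i=0..m. c ^ m * (f $ i * g $ (m - i)))"
    by (simp add: fps_mult_nth sum_distrib_left)
  also have "\<dots> = (\<Sum>i=0..m. (c ^ i * f $ i) * (c ^ (m - i) * g $ (m - i)))"
  proof (rule sum.cong)
    fix i assume "i \<in> {0..m}"
    then have "c ^ m = c ^ i * c ^ (m - i)" by (simp flip: power_add)
    then show "c ^ m * (f $ i * g $ (m - i)) = (c ^ i * f $ i) * (c ^ (m - i) * g $ (m - i))"
      by simp
  qed simp
  finally show "fps_scale c (f * g) $ m = (fps_scale c f * fps_scale c g) $ m"
    by (simp add: fps_mult_nth)
qed

lemma scale_add: "fps_scale c (f + g) = fps_scale c f + fps_scale c g"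
  by (rule fps_ext) (simp add: algebra_simps)
lemma scale_diff: "fps_scale c (f - g) = fps_scale c f - fps_scale c g"
  by (rule fps_ext) (simp add: algebra_simps)
lemma scale_const[simp]: "fps_scale c (fps_const d) = fps_const d"
  by (rule fps_ext) simp
lemma scale_zero[simp]: "fps_scale c 0 = 0"
  by (rule fps_ext) simp
lemma scale_one[simp]: "fps_scale c 1 = 1"
  by (rule fps_ext) simp
lemma scale_X[simp]: "fps_scale c fps_X = fps_const c * fps_X"
  by (rule fps_ext) (auto simp: fps_X_nth le_Suc_eq)
lemma scale_Xpow: "fps_scale c (fps_X ^ n) = fps_const (c ^ n) * fps_X ^ n"
  by (rule fps_ext) simp
lemma scale_sum: "fps_scale c (\<Sum>i\<in>A. f i) = (\<Sum>i\<in>A. fps_scale c (f i))"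
  by (induction A rule: infinite_finite_induct) (simp_all add: scale_add)
lemma scale_prod: "fps_scale c (\<Prod>i\<in>A. f i) = (\<Prod>i\<in>A. fps_scale c (f i))"
  by (induction A rule: infinite_finite_induct) (simp_all add: scale_mult)
lemma scale_inverse:
  assumes "f $ 0 \<noteq> 0"
  shows "fps_scale c (inverse f) = inverse (fps_scale c f)"
proof -
  have "fps_scale c f * fps_scale c (inverse f) = fps_scale c (f * inverse f)"
    by (rule scale_mult[symmetric])
  also have "\<dots> = 1" by (simp only: inverse_mult_eq_1'[OF assms] scale_one)
  finally have "fps_scale c f * fps_scale c (inverse f) = 1" .
  then show ?thesis by (rule fps_inverse_unique[symmetric])
qed

lemma qpoch_fps_0[simp]: "qpoch_fps c q n $ 0 = 1"
  by (induction n) (simp_all add: qpoch_fps_def)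

lemma qpoch_fps_Suc: "qpoch_fps c q (Suc n) = (1 - fps_const c * fps_X) * qpoch_fps (c * q) q n"
  unfolding qpoch_fps_def prod.lessThan_Suc_shift
  by (simp add: mult.assoc)

lemma scale_qpoch: "fps_scale q (qpoch_fps c q n) = qpoch_fps (c * q) q n"
  unfolding qpoch_fps_def scale_prod
  by (intro prod.cong refl) (simp add: scale_diff scale_mult mult_ac flip: fps_const_mult)

lemma qbasis_low: "m < n \<Longrightarrow> qbasis a b q n $ m = 0"
  unfolding qbasis_def by (simp add: mult.assoc fps_X_power_mult_nth)

lemma qbasis_diag: "qbasis a b q n $ n = 1"
  unfolding qbasis_def by (simp add: mult.assoc fps_X_power_mult_nth)

lemma gen_ac:
  fixes Q X L D A C Ci Bi :: "complex fps"
  assumes "C * Ci = 1"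
  shows "Q * C * (X * L * D * A * (Ci * Bi)) = X * D * (Q * L * A * Bi)"
proof -
  have "Q * C * (X * L * D * A * (Ci * Bi)) = (C * Ci) * (X * D * (Q * L * A * Bi))"
    by (simp only: mult.assoc mult.commute mult.left_commute)
  then show ?thesis using assms by simp
qed

lemma qbasis_shift:
  "fps_const (q ^ n) * (1 - fps_const b * fps_X) * qbasis a b q (Suc n)
   = fps_X * (1 - fps_const a * fps_X) * fps_scale q (qbasis a b q n)"
proof -
  have i1: "(1 - fps_const b * fps_X) * inverse (1 - fps_const b * fps_X) = (1::complex fps)"
    by (rule inverse_mult_eq_1') simp
  have e1: "fps_scale q (qbasis a b q n) = fps_const (q ^ n) * fps_X ^ n * qpoch_fps (a * q) q n
          * inverse (qpoch_fps (b * q) q n)"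
    unfolding qbasis_def by (simp add: scale_mult scale_Xpow scale_qpoch scale_inverse)
  have e2: "qbasis a b q (Suc n) = fps_X * fps_X ^ n * (1 - fps_const a * fps_X) * qpoch_fps (a * q) q n
     * (inverse (1 - fps_const b * fps_X) * inverse (qpoch_fps (b * q) q n))"
    unfolding qbasis_def qpoch_fps_Suc fps_inverse_mult power_Suc
    by (simp only: mult.assoc)
  show ?thesis unfolding e1 e2 by (rule gen_ac[OF i1])
qed


definition eqN :: "nat \<Rightarrow> complex fps \<Rightarrow> complex fps \<Rightarrow> bool" where
  "eqN N f g \<longleftrightarrow> (\<forall>m<N. f $ m = g $ m)"

lemma eqN_refl: "eqN N f f" by (simp add: eqN_def)
lemma eqN_sym: "eqN N f g \<Longrightarrow> eqN N g f" by (simp add: eqN_def)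
lemma eqN_trans: "eqN N f g \<Longrightarrow> eqN N g h \<Longrightarrow> eqN N f h" by (simp add: eqN_def)
lemma eqN_mult: "eqN N f g \<Longrightarrow> eqN N (h * f) (h * g)"
  unfolding eqN_def fps_mult_nth by (intro allI impI sum.cong refl) auto
lemma eqN_add: "eqN N f g \<Longrightarrow> eqN N f' g' \<Longrightarrow> eqN N (f + f') (g + g')"
  by (simp add: eqN_def)
lemma eqN_diff: "eqN N f g \<Longrightarrow> eqN N f' g' \<Longrightarrow> eqN N (f - f') (g - g')"
  by (simp add: eqN_def)
lemma eqN_scale: "eqN N f g \<Longrightarrow> eqN N (fps_scale c f) (fps_scale c g)"
  by (simp add: eqN_def)

lemma qsum_nth:
  assumes "m < N"
  shows "(\<Sum>n<N. fps_const (C n) * qbasis a b q n) $ m = (\<Sum>n\<le>m. C n * qbasis a b q n $ m)"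
proof -
  have "(\<Sum>n<N. fps_const (C n) * qbasis a b q n) $ m = (\<Sum>n<N. C n * qbasis a b q n $ m)"
    by (simp add: fps_sum_nth)
  also have "\<dots> = (\<Sum>n\<le>m. C n * qbasis a b q n $ m)"
    by (rule sum.mono_neutral_right) (use assms in \<open>auto simp: qbasis_low\<close>)
  finally show ?thesis .
qed

lemma qunique:
  assumes "\<And>m. m < N \<Longrightarrow> (\<Sum>n<N. R n * qbasis a b q n $ m) = 0"
  shows "n < N \<Longrightarrow> R n = 0"
proof (induction n rule: less_induct)
  case (less n)
  have "(\<Sum>j<N. R j * qbasis a b q j $ n) = (\<Sum>j<N. if j = n then R n else 0)"
  proof (rule sum.cong)
    fix j assume "j \<in> {..<N}"
    show "R j * qbasis a b q j $ n = (if j = n then R n else 0)"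
    proof (cases "j < n")
      case True then show ?thesis using less.IH less.prems by auto
    next
      case False then show ?thesis by (cases "j = n") (auto simp: qbasis_diag qbasis_low)
    qed
  qed simp
  also have "\<dots> = R n" using less.prems by simp
  finally show ?case using assms[OF less.prems] by simp
qed


definition Bp :: "(nat \<Rightarrow> nat \<Rightarrow> complex) \<Rightarrow> nat \<Rightarrow> nat \<Rightarrow> complex" where
  "Bp B n k = (if k \<le> n then B n k else 0)"

lemma poly_id:
  fixes X P A Bc :: "'a::comm_ring_1"
  shows "X * (1 - A * X) * P - Bc * (X * (1 - A * X) * (X * P)) = (1 - Bc * X) * (X * P - A * (X * (X * P)))"
  by (simp add: algebra_simps)

definition PP :: "(nat \<Rightarrow> nat \<Rightarrow> complex) \<Rightarrow> nat \<Rightarrow> complex \<Rightarrow> complex" where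
  "PP B m y = (\<Sum>k\<le>m. y ^ k * Bp B m k)"

lemma PP_M: "m < M \<Longrightarrow> PP B m y = (\<Sum>k<M. y ^ k * Bp B m k)"
  unfolding PP_def by (rule sum.mono_neutral_left) (auto simp: Bp_def)

definition cc :: "complex \<Rightarrow> complex \<Rightarrow> complex \<Rightarrow> complex \<Rightarrow> nat \<Rightarrow> complex" where
  "cc a b q y n = qpoch (b / y) q n / qpoch (a / y) q n"
definition dd :: "complex \<Rightarrow> complex \<Rightarrow> complex \<Rightarrow> complex \<Rightarrow> nat \<Rightarrow> complex" where
  "dd a b q y n = qpoch (b / y) q n / qpoch (a / y) q (Suc n)"
definition RR :: "complex \<Rightarrow> complex \<Rightarrow> complex \<Rightarrow> (nat \<Rightarrow> nat \<Rightarrow> complex) \<Rightarrow> nat \<Rightarrow> complex \<Rightarrow> complex" where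
  "RR a b q B m y = cc a b q y m * y ^ m + (\<Sum>n\<le>m. dd a b q y n * y ^ n *
      ((if m - n = 1 then b * q ^ n else 0) - a * (q ^ n) ^ (m - n) * Bp B (m - n) 1))"

lemma qpoch_Suc: "qpoch x q (Suc n) = (1 - x) * qpoch (x * q) q n"
  unfolding qpoch_def prod.lessThan_Suc_shift by (simp add: mult.assoc)

lemma qpoch_nz:
  fixes a q y :: complex
  assumes "y \<noteq> 0" "\<forall>j::nat. y \<noteq> a * q ^ j"
  shows "qpoch (a / y) q n \<noteq> 0"
proof -
  have "1 - a / y * q ^ j \<noteq> 0" for j
  proof -
    have "y \<noteq> a * q ^ j" using assms by blast
    then show "1 - a / y * q ^ j \<noteq> 0" using assms(1) by (auto simp: field_simps)
  qed
  then show ?thesis unfolding qpoch_def by (subst prod_zero_iff) auto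
qed

lemma cond_shift:
  fixes a q y :: complex
  assumes "q \<noteq> 0" "y \<noteq> 0" "\<forall>j::nat. y \<noteq> a * q ^ j"
  shows "y / q \<noteq> 0" "\<forall>j::nat. y / q \<noteq> a * q ^ j"
proof -
  show "y / q \<noteq> 0" by (simp add: assms(1,2))
  show "\<forall>j::nat. y / q \<noteq> a * q ^ j"
  proof
    fix j :: nat
    have "y \<noteq> a * q ^ Suc j" using assms by blast
    then show "y / q \<noteq> a * q ^ j" using assms(1) by (auto simp: field_simps)
  qed
qed

lemma cc_Suc:
  assumes "q \<noteq> 0" "y \<noteq> 0" "\<forall>j::nat. y \<noteq> a * q ^ j"
  shows "(y - a) * cc a b q y (Suc i) = (y - b) * cc a b q (y / q) i"
proof -
  have ya: "y - a \<noteq> 0" using assms(3) by (metis eq_iff_diff_eq_0 mult.right_neutral power_0)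
  have nz: "qpoch (a / (y / q)) q i \<noteq> 0" using qpoch_nz[OF cond_shift[OF assms]] .
  have e1: "a / y * q = a / (y / q)" "b / y * q = b / (y / q)" using assms by auto
  show ?thesis unfolding cc_def qpoch_Suc e1 using ya nz assms(2)
    by (simp add: field_simps)
qed

lemma dd_Suc:
  assumes "q \<noteq> 0" "y \<noteq> 0" "\<forall>j::nat. y \<noteq> a * q ^ j"
  shows "(y - a) * dd a b q y (Suc i) = (y - b) * dd a b q (y / q) i"
proof -
  have ya: "y - a \<noteq> 0" using assms(3) by (metis eq_iff_diff_eq_0 mult.right_neutral power_0)
  have nz: "qpoch (a / (y / q)) q (Suc i) \<noteq> 0" using qpoch_nz[OF cond_shift[OF assms]] .
  have e1: "a / y * q = a / (y / q)" "b / y * q = b / (y / q)" using assms by auto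
  show ?thesis unfolding dd_def qpoch_Suc[of _ _ "Suc i"] qpoch_Suc[of "b / y"] e1 using ya nz assms(2)
    by (simp add: field_simps)
qed

lemma dd_0:
  assumes "y \<noteq> 0" "\<forall>j::nat. y \<noteq> a * q ^ j"
  shows "(y - a) * dd a b q y 0 = y"
proof -
  have ya: "y - a \<noteq> 0" using assms(2) by (metis eq_iff_diff_eq_0 mult.right_neutral power_0)
  show ?thesis unfolding dd_def qpoch_def using ya assms(1) by (simp add: field_simps)
qed

lemma qpow_id: "(q::complex) ^ i * (q ^ Suc i) ^ d = q ^ (i + d) * (q ^ i) ^ d"
  by (simp add: power_mult_distrib power_add mult_ac)

context
  fixes a b q :: complex and B :: "nat \<Rightarrow> nat \<Rightarrow> complex"
  assumes q: "q \<noteq> 0"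
    and Bd: "\<forall>k m. fps_nth (fps_X ^ k :: complex fps) m
                    = (\<Sum>n\<in>{k..m}. B n k * fps_nth (qbasis a b q n) m)"
begin

lemma F_eq: "eqN N (\<Sum>n<N. fps_const (Bp B n k) * qbasis a b q n) (fps_X ^ k)"
  unfolding eqN_def
proof (intro allI impI)
  fix m assume m: "m < N"
  have "(\<Sum>n<N. fps_const (Bp B n k) * qbasis a b q n) $ m = (\<Sum>n\<le>m. Bp B n k * qbasis a b q n $ m)"
    by (rule qsum_nth[OF m])
  also have "\<dots> = (\<Sum>n\<in>{k..m}. B n k * qbasis a b q n $ m)"
    by (rule sum.mono_neutral_cong_right) (auto simp: Bp_def)
  also have "\<dots> = (fps_X ^ k :: complex fps) $ m" using Bd by simp
  finally show "(\<Sum>n<N. fps_const (Bp B n k) * qbasis a b q n) $ m = (fps_X ^ k :: complex fps) $ m" .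
qed

lemma term_ac: "(1 - fps_const b * fps_X) * (fps_const (q ^ n * c) * P)
   = fps_const c * (fps_const (q ^ n) * (1 - fps_const b * fps_X) * P)"
  by (simp only: fps_const_mult[symmetric] mult.assoc mult.commute mult.left_commute)

lemma S_eq: "(1 - fps_const b * fps_X) * (\<Sum>n<N. fps_const (q ^ n * Bp B n k) * qbasis a b q (Suc n))
   = fps_X * (1 - fps_const a * fps_X) * fps_scale q (\<Sum>n<N. fps_const (Bp B n k) * qbasis a b q n)"
proof -
  have "(1 - fps_const b * fps_X) * (\<Sum>n<N. fps_const (q ^ n * Bp B n k) * qbasis a b q (Suc n))
     = (\<Sum>n<N. fps_const (Bp B n k) * (fps_X * (1 - fps_const a * fps_X) * fps_scale q (qbasis a b q n)))"
    unfolding sum_distrib_left term_ac qbasis_shift ..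
  also have "\<dots> = fps_X * (1 - fps_const a * fps_X) * (\<Sum>n<N. fps_const (Bp B n k) * fps_scale q (qbasis a b q n))"
    unfolding sum_distrib_left by (intro sum.cong refl) (simp only: mult.assoc mult.commute mult.left_commute)
  also have "\<dots> = fps_X * (1 - fps_const a * fps_X) * fps_scale q (\<Sum>n<N. fps_const (Bp B n k) * qbasis a b q n)"
    by (simp only: scale_sum scale_mult scale_const)
  finally show ?thesis .
qed

lemma S_eqN: "eqN N ((1 - fps_const b * fps_X) * (\<Sum>n<N. fps_const (q ^ n * Bp B n k) * qbasis a b q (Suc n)))
   (fps_X * (1 - fps_const a * fps_X) * (fps_const (q ^ k) * fps_X ^ k))"
  unfolding S_eq scale_Xpow[symmetric] by (intro eqN_mult eqN_scale F_eq)


lemma rec_fps: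
  assumes k: "k = Suc j"
  shows "eqN N (fps_const (q / q ^ k) * (\<Sum>n<N. fps_const (q ^ n * Bp B n j) * qbasis a b q (Suc n))
             - fps_const (b / q ^ k) * (\<Sum>n<N. fps_const (q ^ n * Bp B n k) * qbasis a b q (Suc n)))
          ((\<Sum>n<N. fps_const (Bp B n k) * qbasis a b q n)
             - fps_const a * (\<Sum>n<N. fps_const (Bp B n (Suc k)) * qbasis a b q n))"
  (is "eqN N ?T ?Fd")
proof -
  define C :: "complex fps" where "C = 1 - fps_const b * fps_X"
  define c :: "complex fps" where "c = fps_X * (1 - fps_const a * fps_X)"
  define Sj where "Sj = (\<Sum>n<N. fps_const (q ^ n * Bp B n j) * qbasis a b q (Suc n))"
  define Sk where "Sk = (\<Sum>n<N. fps_const (q ^ n * Bp B n k) * qbasis a b q (Suc n))"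
  have h1: "eqN N (C * Sj) (c * (fps_const (q ^ j) * fps_X ^ j))"
    unfolding C_def c_def Sj_def by (rule S_eqN)
  have h2: "eqN N (C * Sk) (c * (fps_const (q ^ k) * fps_X ^ k))"
    unfolding C_def c_def Sk_def by (rule S_eqN)
  have e1: "C * (fps_const (q / q ^ k) * Sj - fps_const (b / q ^ k) * Sk)
      = fps_const (q / q ^ k) * (C * Sj) - fps_const (b / q ^ k) * (C * Sk)"
    by (simp only: right_diff_distrib mult.left_commute)
  have e2: "eqN N (C * (fps_const (q / q ^ k) * Sj - fps_const (b / q ^ k) * Sk))
     (fps_const (q / q ^ k) * (c * (fps_const (q ^ j) * fps_X ^ j)) - fps_const (b / q ^ k) * (c * (fps_const (q ^ k) * fps_X ^ k)))"
    unfolding e1 by (intro eqN_diff eqN_mult h1 h2)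
  have s1: "q / q ^ k * q ^ j = 1" using q k by (simp add: field_simps)
  have s2: "b / q ^ k * q ^ k = b" using q by simp
  have g: "\<And>A Bx cx P :: complex fps. A * (cx * (Bx * P)) = (A * Bx) * (cx * P)"
    by (simp add: ac_simps)
  have e3: "fps_const (q / q ^ k) * (c * (fps_const (q ^ j) * fps_X ^ j)) - fps_const (b / q ^ k) * (c * (fps_const (q ^ k) * fps_X ^ k))
      = c * fps_X ^ j - fps_const b * (c * fps_X ^ k)"
  proof -
    have 1: "fps_const (q / q ^ k) * (c * (fps_const (q ^ j) * fps_X ^ j)) = c * fps_X ^ j"
      by (simp only: g fps_const_mult s1 fps_const_1_eq_1 mult_1_left)
    have 2: "fps_const (b / q ^ k) * (c * (fps_const (q ^ k) * fps_X ^ k)) = fps_const b * (c * fps_X ^ k)"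
      by (simp only: g fps_const_mult s2 mult.assoc)
    show ?thesis by (simp only: 1 2)
  qed
  have e4: "c * fps_X ^ j - fps_const b * (c * fps_X ^ k) = C * (fps_X ^ k - fps_const a * fps_X ^ Suc k)"
    unfolding c_def C_def k power_Suc by (rule poly_id)
  have e5: "eqN N (C * (fps_X ^ k - fps_const a * fps_X ^ Suc k)) (C * ?Fd)"
    by (rule eqN_mult, rule eqN_sym, rule eqN_diff[OF F_eq eqN_mult[OF F_eq]])
  have e6: "eqN N (C * (fps_const (q / q ^ k) * Sj - fps_const (b / q ^ k) * Sk)) (C * ?Fd)"
    using e2 e5 unfolding e3 e4 by (rule eqN_trans)
  have iC: "inverse C * C = 1" unfolding C_def by (rule inverse_mult_eq_1) simp
  have "eqN N (inverse C * (C * (fps_const (q / q ^ k) * Sj - fps_const (b / q ^ k) * Sk))) (inverse C * (C * ?Fd))"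
    by (rule eqN_mult[OF e6])
  then show ?thesis unfolding mult.assoc[symmetric] iC mult_1_left Sj_def Sk_def .
qed


lemma qbasis_0: "qbasis a b q 0 = 1"
  by (simp add: qbasis_def qpoch_fps_def)

lemma rec_coeff:
  "Bp B n (Suc j) - a * Bp B n (Suc (Suc j)) =
     (if n = 0 then 0 else q / q ^ Suc j * q ^ (n - 1) * Bp B (n - 1) j - b / q ^ Suc j * q ^ (n - 1) * Bp B (n - 1) (Suc j))"
proof -
  define k where "k = Suc j"
  define t where "t i = q / q ^ k * q ^ i * Bp B i j - b / q ^ k * q ^ i * Bp B i k" for i
  define R where "R i = Bp B i k - a * Bp B i (Suc k) - (if i = 0 then 0 else t (i - 1))" for i
  define N where "N = Suc n"
  have "R i = 0" if "i < N" for i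
  proof (rule qunique[of N R a b q, OF _ that])
    fix m assume m: "m < N"
    from rec_fps[OF k_def, of N] m have E:
      "(fps_const (q / q ^ k) * (\<Sum>n<N. fps_const (q ^ n * Bp B n j) * qbasis a b q (Suc n))
             - fps_const (b / q ^ k) * (\<Sum>n<N. fps_const (q ^ n * Bp B n k) * qbasis a b q (Suc n))) $ m
      = ((\<Sum>n<N. fps_const (Bp B n k) * qbasis a b q n)
             - fps_const a * (\<Sum>n<N. fps_const (Bp B n (Suc k)) * qbasis a b q n)) $ m"
      unfolding eqN_def by blast
    have L: "(fps_const (q / q ^ k) * (\<Sum>n<N. fps_const (q ^ n * Bp B n j) * qbasis a b q (Suc n))
             - fps_const (b / q ^ k) * (\<Sum>n<N. fps_const (q ^ n * Bp B n k) * qbasis a b q (Suc n))) $ m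
          = (\<Sum>i<N. t i * qbasis a b q (Suc i) $ m)"
      by (simp add: fps_sum_nth sum_distrib_left t_def algebra_simps sum_subtractf)
    have Rr: "((\<Sum>n<N. fps_const (Bp B n k) * qbasis a b q n)
             - fps_const a * (\<Sum>n<N. fps_const (Bp B n (Suc k)) * qbasis a b q n)) $ m
          = (\<Sum>i<N. (Bp B i k - a * Bp B i (Suc k)) * qbasis a b q i $ m)"
      by (simp add: fps_sum_nth sum_distrib_left algebra_simps sum_subtractf)
    define g where "g i = (if i = 0 then 0 else t (i - 1)) * qbasis a b q i $ m" for i
    have "(\<Sum>i<Suc N. g i) = g 0 + (\<Sum>i<N. g (Suc i))" by (rule sum.lessThan_Suc_shift)
    also have "\<dots> = (\<Sum>i<N. t i * qbasis a b q (Suc i) $ m)" by (simp add: g_def)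
    finally have G1: "(\<Sum>i<Suc N. g i) = (\<Sum>i<N. t i * qbasis a b q (Suc i) $ m)" .
    have "g N = 0" using m by (simp add: g_def qbasis_low)
    then have G2: "(\<Sum>i<Suc N. g i) = (\<Sum>i<N. g i)" by simp
    have "(\<Sum>i<N. R i * qbasis a b q i $ m)
        = (\<Sum>i<N. (Bp B i k - a * Bp B i (Suc k)) * qbasis a b q i $ m) - (\<Sum>i<N. g i)"
      by (simp add: R_def g_def algebra_simps sum_subtractf sum.distrib)
    also have "\<dots> = 0" using E L Rr G1 G2 by simp
    finally show "(\<Sum>i<N. R i * qbasis a b q i $ m) = 0" .
  qed
  then have "R n = 0" by (simp add: N_def)
  then show ?thesis by (simp add: R_def t_def k_def)
qed

lemma rec_coeff0: "Bp B n 0 = (if n = 0 then 1 else 0)"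
proof -
  define R where "R i = Bp B i 0 - (if i = 0 then 1 else 0)" for i
  define N where "N = Suc n"
  have "R i = 0" if "i < N" for i
  proof (rule qunique[of N R a b q, OF _ that])
    fix m assume m: "m < N"
    from F_eq[of N 0] m have E: "(\<Sum>n<N. fps_const (Bp B n 0) * qbasis a b q n) $ m = (1::complex fps) $ m"
      unfolding eqN_def by simp
    have "(\<Sum>i<N. R i * qbasis a b q i $ m) = (\<Sum>i<N. Bp B i 0 * qbasis a b q i $ m)
             - (\<Sum>i<N. (if i = 0 then 1 else 0) * qbasis a b q i $ m)"
      by (simp add: R_def algebra_simps sum_subtractf)
    also have "(\<Sum>i<N. (if i = 0 then 1 else 0) * qbasis a b q i $ m) = (\<Sum>i<N. if i = 0 then qbasis a b q i $ m else 0)"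
      by (rule sum.cong) auto
    also have "\<dots> = qbasis a b q 0 $ m"
      using m by (simp add: sum.delta)
    also have "(\<Sum>i<N. Bp B i 0 * qbasis a b q i $ m) = (1::complex fps) $ m"
      using E by (simp add: fps_sum_nth)
    finally show "(\<Sum>i<N. R i * qbasis a b q i $ m) = 0" by (simp add: qbasis_0)
  qed
  then have "R n = 0" by (simp add: N_def)
  then show ?thesis by (simp add: R_def)
qed


lemma FE:
  "(y - a) * PP B (Suc n) y = (if n = 0 then b * y else 0) - a * y * Bp B (Suc n) 1
      + (y - b) * y * q ^ n * PP B n (y / q)"
proof -
  define m where "m = Suc n"
  define M where "M = Suc (Suc (Suc n))"
  have rc: "Bp B m (Suc j) - a * Bp B m (Suc (Suc j)) =
     q / q ^ Suc j * q ^ n * Bp B n j - b / q ^ Suc j * q ^ n * Bp B n (Suc j)" for j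
    using rec_coeff[of m j] by (simp add: m_def)
  have b0m: "Bp B m 0 = 0" using rec_coeff0[of m] by (simp add: m_def)
  have b0n: "Bp B n 0 = (if n = 0 then 1 else 0)" by (rule rec_coeff0)
  have sumeq: "(\<Sum>j<M. y ^ Suc (Suc j) * (Bp B m (Suc j) - a * Bp B m (Suc (Suc j))))
     = (\<Sum>j<M. y ^ Suc (Suc j) * (q / q ^ Suc j * q ^ n * Bp B n j - b / q ^ Suc j * q ^ n * Bp B n (Suc j)))"
    using rc by simp
  have P1: "PP B m y = (\<Sum>k<Suc M. y ^ k * Bp B m k)" by (rule PP_M) (simp add: m_def M_def)
  have P2: "PP B m y = (\<Sum>k<Suc (Suc M). y ^ k * Bp B m k)" by (rule PP_M) (simp add: m_def M_def)
  have P3: "PP B n (y / q) = (\<Sum>k<Suc M. (y / q) ^ k * Bp B n k)" by (rule PP_M) (simp add: M_def)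
  have P4: "PP B n (y / q) = (\<Sum>k<M. (y / q) ^ k * Bp B n k)" by (rule PP_M) (simp add: M_def)
  have A1: "(\<Sum>j<M. y ^ Suc (Suc j) * Bp B m (Suc j)) = y * PP B m y"
  proof -
    have "(\<Sum>k<Suc M. y ^ k * Bp B m k) = y ^ 0 * Bp B m 0 + (\<Sum>j<M. y ^ Suc j * Bp B m (Suc j))"
      by (rule sum.lessThan_Suc_shift)
    then have "PP B m y = (\<Sum>j<M. y ^ Suc j * Bp B m (Suc j))" using P1 b0m by simp
    then show ?thesis by (simp add: sum_distrib_left mult.assoc)
  qed
  have A2: "(\<Sum>j<M. y ^ Suc (Suc j) * Bp B m (Suc (Suc j))) = PP B m y - y * Bp B m 1"
  proof -
    have "(\<Sum>k<Suc (Suc M). y ^ k * Bp B m k) = y ^ 0 * Bp B m 0 + (\<Sum>j<Suc M. y ^ Suc j * Bp B m (Suc j))"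
      by (rule sum.lessThan_Suc_shift)
    also have "(\<Sum>j<Suc M. y ^ Suc j * Bp B m (Suc j)) = y ^ 1 * Bp B m 1 + (\<Sum>j<M. y ^ Suc (Suc j) * Bp B m (Suc (Suc j)))"
      by (subst sum.lessThan_Suc_shift) simp
    finally show ?thesis using P2 b0m by simp
  qed
  have C1: "(\<Sum>j<M. y ^ Suc (Suc j) * (q / q ^ Suc j * q ^ n * Bp B n j)) = y * y * q ^ n * PP B n (y / q)"
  proof -
    have t: "y ^ Suc (Suc j) * (q / q ^ Suc j * q ^ n * Bp B n j) = y * y * q ^ n * ((y / q) ^ j * Bp B n j)" for j
      using q by (simp add: power_divide field_simps)
    show ?thesis unfolding P4 sum_distrib_left by (rule sum.cong[OF refl]) (rule t)
  qed
  have C2: "(\<Sum>j<M. y ^ Suc (Suc j) * (b / q ^ Suc j * q ^ n * Bp B n (Suc j))) = b * y * q ^ n * (PP B n (y / q) - Bp B n 0)"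
  proof -
    have t: "y ^ Suc (Suc j) * (b / q ^ Suc j * q ^ n * Bp B n (Suc j)) = b * y * q ^ n * ((y / q) ^ Suc j * Bp B n (Suc j))" for j
      using q by (simp add: power_divide field_simps)
    have e: "(\<Sum>j<M. y ^ Suc (Suc j) * (b / q ^ Suc j * q ^ n * Bp B n (Suc j))) = b * y * q ^ n * (\<Sum>j<M. (y / q) ^ Suc j * Bp B n (Suc j))"
      unfolding sum_distrib_left by (rule sum.cong[OF refl]) (rule t)
    have sh: "PP B n (y / q) = Bp B n 0 + (\<Sum>j<M. (y / q) ^ Suc j * Bp B n (Suc j))"
      using P3 sum.lessThan_Suc_shift[of "\<lambda>k. (y / q) ^ k * Bp B n k" M] by simp
    show ?thesis unfolding e sh by simp
  qed
  have "(\<Sum>j<M. y ^ Suc (Suc j) * (Bp B m (Suc j) - a * Bp B m (Suc (Suc j))))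
      = (\<Sum>j<M. y ^ Suc (Suc j) * Bp B m (Suc j)) - a * (\<Sum>j<M. y ^ Suc (Suc j) * Bp B m (Suc (Suc j)))"
    by (simp add: right_diff_distrib sum_subtractf sum_distrib_left mult_ac)
  moreover have "(\<Sum>j<M. y ^ Suc (Suc j) * (q / q ^ Suc j * q ^ n * Bp B n j - b / q ^ Suc j * q ^ n * Bp B n (Suc j)))
      = (\<Sum>j<M. y ^ Suc (Suc j) * (q / q ^ Suc j * q ^ n * Bp B n j)) - (\<Sum>j<M. y ^ Suc (Suc j) * (b / q ^ Suc j * q ^ n * Bp B n (Suc j)))"
    by (simp add: right_diff_distrib sum_subtractf)
  ultimately have "y * PP B m y - a * (PP B m y - y * Bp B m 1) = y * y * q ^ n * PP B n (y / q) - b * y * q ^ n * (PP B n (y / q) - Bp B n 0)"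
    using sumeq A1 A2 C1 C2 by simp
  then show ?thesis unfolding m_def b0n by (auto simp: algebra_simps)
qed


lemma RR_step:
  assumes y: "y \<noteq> 0" "\<forall>j::nat. y \<noteq> a * q ^ j"
  shows "(y - a) * RR a b q B (Suc n) y = (if n = 0 then b * y else 0) - a * y * Bp B (Suc n) 1
      + (y - b) * y * q ^ n * RR a b q B n (y / q)"
proof -
  define st where "st i = (if Suc n - Suc i = 1 then b * q ^ Suc i else 0) - a * (q ^ Suc i) ^ (Suc n - Suc i) * Bp B (Suc n - Suc i) 1" for i
  define st' where "st' i = (if n - i = 1 then b * q ^ i else 0) - a * (q ^ i) ^ (n - i) * Bp B (n - i) 1" for i
  have RRs: "RR a b q B (Suc n) y = cc a b q y (Suc n) * y ^ Suc n
      + dd a b q y 0 * ((if n = 0 then b else 0) - a * Bp B (Suc n) 1)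
      + (\<Sum>i\<le>n. dd a b q y (Suc i) * y ^ Suc i * st i)"
    unfolding RR_def st_def sum.atMost_Suc_shift by simp
  have RRn: "RR a b q B n (y / q) = cc a b q (y / q) n * (y / q) ^ n + (\<Sum>i\<le>n. dd a b q (y / q) i * (y / q) ^ i * st' i)"
    unfolding RR_def st'_def ..
  have yp: "y ^ Suc i = y * q ^ i * (y / q) ^ i" for i using q by (simp add: power_divide)
  have T1: "(y - a) * (cc a b q y (Suc n) * y ^ Suc n) = (y - b) * y * q ^ n * (cc a b q (y / q) n * (y / q) ^ n)"
  proof -
    have "(y - a) * (cc a b q y (Suc n) * y ^ Suc n) = ((y - a) * cc a b q y (Suc n)) * y ^ Suc n"
      by (simp only: mult_ac)
    also have "\<dots> = ((y - b) * cc a b q (y / q) n) * (y * q ^ n * (y / q) ^ n)"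
      by (simp only: cc_Suc[OF q y] yp)
    finally show ?thesis by (simp only: mult_ac)
  qed
  have T2: "(y - a) * (dd a b q y 0 * ((if n = 0 then b else 0) - a * Bp B (Suc n) 1))
      = (if n = 0 then b * y else 0) - a * y * Bp B (Suc n) 1"
  proof -
    have "(y - a) * (dd a b q y 0 * ((if n = 0 then b else 0) - a * Bp B (Suc n) 1))
       = ((y - a) * dd a b q y 0) * ((if n = 0 then b else 0) - a * Bp B (Suc n) 1)" by (simp only: mult_ac)
    also have "\<dots> = y * ((if n = 0 then b else 0) - a * Bp B (Suc n) 1)" by (simp only: dd_0[OF y])
    finally show ?thesis by (simp add: algebra_simps)
  qed
  have T3: "(y - a) * (dd a b q y (Suc i) * y ^ Suc i * st i) = (y - b) * y * q ^ n * (dd a b q (y / q) i * (y / q) ^ i * st' i)"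
    if i: "i \<le> n" for i
  proof -
    obtain d where d: "n = i + d" using i le_Suc_ex by blast
    have A: "q ^ i * st i = q ^ n * st' i"
      unfolding st_def st'_def d using qpow_id[of q i d]
      by (simp add: algebra_simps power_add)
    have Bq: "(y - a) * dd a b q y (Suc i) = (y - b) * dd a b q (y / q) i" by (rule dd_Suc[OF q y])
    have "(y - a) * (dd a b q y (Suc i) * y ^ Suc i * st i)
       = ((y - a) * dd a b q y (Suc i)) * (y * (y / q) ^ i * (q ^ i * st i))"
      unfolding yp by (simp only: mult_ac)
    also have "\<dots> = ((y - b) * dd a b q (y / q) i) * (y * (y / q) ^ i * (q ^ n * st' i))"
      by (simp only: A Bq)
    finally show ?thesis by (simp only: mult_ac)
  qed
  have T3s: "(y - a) * (\<Sum>i\<le>n. dd a b q y (Suc i) * y ^ Suc i * st i) = (y - b) * y * q ^ n * (\<Sum>i\<le>n. dd a b q (y / q) i * (y / q) ^ i * st' i)"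
    unfolding sum_distrib_left by (rule sum.cong[OF refl]) (use T3 in auto)
  show ?thesis unfolding RRs RRn distrib_left T1 T2 T3s by (simp add: algebra_simps)
qed

lemma PP_RR: "y \<noteq> 0 \<Longrightarrow> \<forall>j::nat. y \<noteq> a * q ^ j \<Longrightarrow> PP B m y = RR a b q B m y"
proof (induction m arbitrary: y)
  case 0
  then show ?case using rec_coeff0[of 0] by (simp add: PP_def RR_def Bp_def cc_def qpoch_def)
next
  case (Suc n)
  have ya: "y - a \<noteq> 0" using Suc.prems(2) by (metis eq_iff_diff_eq_0 mult.right_neutral power_0)
  have IH: "PP B n (y / q) = RR a b q B n (y / q)"
    using Suc.IH cond_shift[OF q Suc.prems] by blast
  have "(y - a) * PP B (Suc n) y = (y - a) * RR a b q B (Suc n) y"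
    unfolding FE RR_step[OF Suc.prems] IH ..
  then show ?case using ya by simp
qed

end

theorem lemma2p2:
  fixes a b q y :: complex
    and B :: "nat \<Rightarrow> nat \<Rightarrow> complex"
    and Gk :: "nat \<Rightarrow> complex fps"
  assumes q: "q \<noteq> 0"
    and B_def: "\<forall>k m. fps_nth (fps_X ^ k :: complex fps) m
                    = (\<Sum>n\<in>{k..m}. B n k * fps_nth (qbasis a b q n) m)"
    and Gk_def: "\<forall>k. Gk k = Abs_fps (\<lambda>n. if k \<le> n then B n k else 0)"
    and y: "y \<noteq> 0" "\<forall>j::nat. y \<noteq> a * q ^ j"
  shows "(\<Sum>k. fps_const (y ^ k) * Gk k)
       = (\<Sum>n. fps_const (qpoch (b / y) q n / qpoch (a / y) q n * y ^ n) * fps_X ^ n)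
       + (\<Sum>n. (fps_const (b * q ^ n) * fps_X - fps_const a * fps_scale (q ^ n) (Gk 1))
               * fps_const (qpoch (b / y) q n / qpoch (a / y) q (Suc n) * y ^ n) * fps_X ^ n)"
proof (rule fps_ext)
  fix m
  have Gn: "Gk k $ n = Bp B n k" for k n using Gk_def by (simp add: Bp_def)
  have L: "(\<Sum>k. fps_const (y ^ k) * Gk k) $ m = PP B m y"
  proof -
    have "(\<Sum>k. fps_const (y ^ k) * Gk k) $ m = (\<Sum>k\<le>m. (fps_const (y ^ k) * Gk k) $ m)"
      by (rule fps_suminf_lower) (simp add: Gn Bp_def)
    then show ?thesis by (simp add: PP_def Gn)
  qed
  have R1: "(\<Sum>n. fps_const (qpoch (b / y) q n / qpoch (a / y) q n * y ^ n) * fps_X ^ n) $ m = cc a b q y m * y ^ m"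
  proof -
    have "(\<Sum>n. fps_const (qpoch (b / y) q n / qpoch (a / y) q n * y ^ n) * fps_X ^ n) $ m
        = (\<Sum>n\<le>m. (fps_const (qpoch (b / y) q n / qpoch (a / y) q n * y ^ n) * fps_X ^ n) $ m)"
      by (rule fps_suminf_lower) (simp add: fps_X_power_nth)
    also have "\<dots> = (\<Sum>n\<le>m. if n = m then cc a b q y m * y ^ m else 0)"
      by (rule sum.cong[OF refl]) (auto simp: fps_X_power_nth cc_def)
    finally show ?thesis by simp
  qed
  have h: "((fps_const (b * q ^ n) * fps_X - fps_const a * fps_scale (q ^ n) (Gk 1))
               * fps_const (qpoch (b / y) q n / qpoch (a / y) q (Suc n) * y ^ n) * fps_X ^ n) $ m
      = (if m < n then 0 else dd a b q y n * y ^ n *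
          ((if m - n = 1 then b * q ^ n else 0) - a * (q ^ n) ^ (m - n) * Bp B (m - n) 1))" for n
  proof -
    have F: "(fps_const (b * q ^ n) * fps_X - fps_const a * fps_scale (q ^ n) (Gk 1)) $ j
       = (if j = 1 then b * q ^ n else 0) - a * (q ^ n) ^ j * Bp B j 1" for j
      by (simp add: Gn fps_X_nth)
    show ?thesis unfolding fps_X_power_mult_right_nth fps_mult_right_const_nth F dd_def
      by (simp add: mult.commute)
  qed
  have R2: "(\<Sum>n. (fps_const (b * q ^ n) * fps_X - fps_const a * fps_scale (q ^ n) (Gk 1))
               * fps_const (qpoch (b / y) q n / qpoch (a / y) q (Suc n) * y ^ n) * fps_X ^ n) $ m
     = (\<Sum>n\<le>m. dd a b q y n * y ^ n *
          ((if m - n = 1 then b * q ^ n else 0) - a * (q ^ n) ^ (m - n) * Bp B (m - n) 1))"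
  proof -
    have "(\<Sum>n. (fps_const (b * q ^ n) * fps_X - fps_const a * fps_scale (q ^ n) (Gk 1))
               * fps_const (qpoch (b / y) q n / qpoch (a / y) q (Suc n) * y ^ n) * fps_X ^ n) $ m
      = (\<Sum>n\<le>m. ((fps_const (b * q ^ n) * fps_X - fps_const a * fps_scale (q ^ n) (Gk 1))
               * fps_const (qpoch (b / y) q n / qpoch (a / y) q (Suc n) * y ^ n) * fps_X ^ n) $ m)"
      by (rule fps_suminf_lower) (simp add: fps_X_power_mult_right_nth)
    also have "\<dots> = (\<Sum>n\<le>m. dd a b q y n * y ^ n *
          ((if m - n = 1 then b * q ^ n else 0) - a * (q ^ n) ^ (m - n) * Bp B (m - n) 1))"
      by (rule sum.cong[OF refl]) (simp only: h, simp)
    finally show ?thesis .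
  qed
  have "PP B m y = RR a b q B m y" by (rule PP_RR[OF q B_def y])
  then show "(\<Sum>k. fps_const (y ^ k) * Gk k) $ m = (
       (\<Sum>n. fps_const (qpoch (b / y) q n / qpoch (a / y) q n * y ^ n) * fps_X ^ n)
       + (\<Sum>n. (fps_const (b * q ^ n) * fps_X - fps_const a * fps_scale (q ^ n) (Gk 1))
               * fps_const (qpoch (b / y) q n / qpoch (a / y) q (Suc n) * y ^ n) * fps_X ^ n)) $ m"
    unfolding fps_add_nth L R1 R2 RR_def .
qed

end
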